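(* Let $v^*\in\Delta$ be a linearly stable equilibrium. Then almost surely on the event $\{\lim_{n\to\infty}v_n=v^*\}$, the set $E\setminus\mathrm{supp}(v^* )$ is visited by $(X_n)$ only finitely many times.
   Context: Let $N\ge2$, $E=\{1,\dots,N\}$, $\alpha>1$, and let $A=(A_{i,j})_{i,j\le N}$ be a symmetric matrix with nonnegative entries, $A_{i,j}>0$ for $i\ne j$, and $\sum_j A_{i,j}$ independent of $i$. Let $(X_n)_{n\ge0}$ be a process on $E$ with arbitrary initial state such that, with $\mathcal F_n=\sigma(X_k;k\le n)$ and $Z_n(j)=\sum_{\ell=0}^n\mathbf 1_{\{X_\ell=j\}}$, $\mathbb P(X_{n+1}=j\mid\mathcal F_n)=\dfrac{A_{X_n,j}(1+Z_n(j))^\alpha}{\sum_{k\le N}A_{X_n,k}(1+Z_n(k))^\alpha}$, and let $v_n(i)=Z_n(i)/(n+1)$. Let $\Delta=\{v\in\mathbb R_+^N:\ \sum_i v_i=1,\ v_i\le 3/4 \text{ whenever } A_{i,i}=0\}$. For $v$ with nonnegative coordinates let $v^\alpha=(v_i^\alpha)_i$, $H(v)=\sum_{i,j}A_{i,j}v_i^\alpha v_j^\alpha$, $\pi_i(v)=v_i^\alpha(Av^\alpha)_i/H(v)$, and on $\Delta$ let $F(v)=-v+\pi(v)$. An equilibrium is $v\in\Delta$ with $F(v)=0$; with $DF(v)$ the differential at $v$ of $v\mapsto -v+\pi(v)$ acting on $\{x:\sum_ix_i=0\}$, an equilibrium is linearly stable if all eigenvalues of $DF(v)$ have negative real parts.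 $\mathrm{supp}(v)=\{i:v_i\ne0\}$. *)

theory Defs
  imports "HOL-Analysis.Analysis" "HOL-Probability.Probability"
begin

text \<open>The state space E is represented by a finite type 'n (E = UNIV, N = CARD('n)).
  Vectors in R^N are elements of real^'n, the matrix A is real^'n^'n.\<close>

definition vpow :: "real \<Rightarrow> real^'n \<Rightarrow> real^'n" where
  "vpow \<alpha> v = (\<chi> i. (v $ i) powr \<alpha>)"

definition Hfun :: "real^'n^'n \<Rightarrow> real \<Rightarrow> real^'n \<Rightarrow> real" where
  "Hfun A \<alpha> v = (\<Sum>i\<in>UNIV. \<Sum>j\<in>UNIV. A $ i $ j * (v $ i) powr \<alpha> * (v $ j) powr \<alpha>)"

definition pifun :: "real^'n^'n \<Rightarrow> real \<Rightarrow> real^'n \<Rightarrow> real^'n" where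
  "pifun A \<alpha> v = (\<chi> i. (v $ i) powr \<alpha> * (A *v vpow \<alpha> v) $ i / Hfun A \<alpha> v)"

definition Ffun :: "real^'n^'n \<Rightarrow> real \<Rightarrow> real^'n \<Rightarrow> real^'n" where
  "Ffun A \<alpha> v = - v + pifun A \<alpha> v"

definition Delta :: "real^'n^'n \<Rightarrow> (real^'n) set" where
  "Delta A = {v. (\<forall>i. 0 \<le> v $ i) \<and> (\<Sum>i\<in>UNIV. v $ i) = 1 \<and> (\<forall>i. A $ i $ i = 0 \<longrightarrow> v $ i \<le> 3/4)}"

definition equilibrium :: "real^'n^'n \<Rightarrow> real \<Rightarrow> real^'n \<Rightarrow> bool" where
  "equilibrium A \<alpha> v \<longleftrightarrow> v \<in> Delta A \<and> Ffun A \<alpha> v = 0"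

definition tangent_space :: "(real^'n) set" where
  "tangent_space = {x. (\<Sum>i\<in>UNIV. x $ i) = 0}"

text \<open>All (complex) eigenvalues of the real linear map L acting on T have negative real part:
  a + i b is an eigenvalue of the complexification iff there are x, y in T, not both zero,
  with L(x + i y) = (a + i b)(x + i y).\<close>
definition eigenvalues_neg_re_on :: "(real^'n) set \<Rightarrow> (real^'n \<Rightarrow> real^'n) \<Rightarrow> bool" where
  "eigenvalues_neg_re_on T L \<longleftrightarrow>
     (\<forall>a b. (\<exists>x y. x \<in> T \<and> y \<in> T \<and> (x \<noteq> 0 \<or> y \<noteq> 0) \<and>
                   L x = a *\<^sub>R x - b *\<^sub>R y \<and> L y = b *\<^sub>R x + a *\<^sub>R y) \<longrightarrow> a < 0)"

definition linearly_stable :: "real^'n^'n \<Rightarrow> real \<Rightarrow> real^'n \<Rightarrow> bool" where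
  "linearly_stable A \<alpha> v \<longleftrightarrow> equilibrium A \<alpha> v \<and>
     (\<exists>DF. (Ffun A \<alpha> has_derivative DF) (at v within Delta A) \<and>
           (\<forall>x\<in>tangent_space. DF x \<in> tangent_space) \<and>
           eigenvalues_neg_re_on tangent_space DF)"

definition Zcount :: "(nat \<Rightarrow> 'w \<Rightarrow> 'n) \<Rightarrow> nat \<Rightarrow> 'w \<Rightarrow> 'n \<Rightarrow> nat" where
  "Zcount X n \<omega> j = card {l. l \<le> n \<and> X l \<omega> = j}"

definition empirical :: "(nat \<Rightarrow> 'w \<Rightarrow> 'n::finite) \<Rightarrow> nat \<Rightarrow> 'w \<Rightarrow> real^'n" where
  "empirical X n \<omega> = (\<chi> i. real (Zcount X n \<omega> i) / real (n + 1))"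

definition nat_filtration :: "'w measure \<Rightarrow> (nat \<Rightarrow> 'w \<Rightarrow> 'n) \<Rightarrow> nat \<Rightarrow> 'w measure" where
  "nat_filtration M X n = sigma (space M) (\<Union>k\<in>{..n}. {X k -` B \<inter> space M | B. True})"

definition trans_prob :: "real^'n^'n \<Rightarrow> real \<Rightarrow> (nat \<Rightarrow> 'w \<Rightarrow> 'n::finite) \<Rightarrow> nat \<Rightarrow> 'w \<Rightarrow> 'n \<Rightarrow> real" where
  "trans_prob A \<alpha> X n \<omega> j =
     A $ (X n \<omega>) $ j * (1 + real (Zcount X n \<omega> j)) powr \<alpha> /
     (\<Sum>k\<in>UNIV. A $ (X n \<omega>) $ k * (1 + real (Zcount X n \<omega> k)) powr \<alpha>)"

end

theory Submission
  imports Defs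
begin


lemma det:
  fixes X :: "nat \<Rightarrow> 'w \<Rightarrow> 'n::finite" and A :: "real^'n^'n" and kk :: "'n \<Rightarrow> 'n"
  assumes al: "\<alpha> > 1" and Anonneg: "\<forall>i j. 0 \<le> A$i$j"
   and kk: "\<forall>x. 0 < A$x$(kk x) \<and> 0 < vstar$(kk x)"
   and c_def: "c = Min (range (\<lambda>x. A$x$(kk x) * (vstar$(kk x)/2) powr \<alpha>))"
   and K_def: "K = (\<Sum>i\<in>UNIV. \<Sum>k\<in>UNIV. A$i$k) / c"
   and lim: "(\<lambda>n. empirical X n \<omega>) \<longlonglongrightarrow> vstar" and vj: "vstar$j = 0" and B: "B \<ge> 0"
  shows "\<exists>m. \<forall>n\<ge>m. trans_prob A \<alpha> X n \<omega> j \<le> K * ((1 + real (Zcount X n \<omega> j)) / (real n + 1)) powr \<alpha>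
                  \<and> trans_prob A \<alpha> X n \<omega> j * B \<le> (1 + real (Zcount X n \<omega> j)) / (real n + 1)"
proof -
  define Amax where "Amax = (\<Sum>i\<in>UNIV. \<Sum>k\<in>UNIV. A$i$k)"
  have Ale: "A$i$k \<le> Amax" for i k
  proof -
    have "A$i$k \<le> (\<Sum>k\<in>UNIV. A$i$k)"
      by (rule member_le_sum[where f="\<lambda>k. A$i$k"]) (use Anonneg in auto)
    also have "\<dots> \<le> Amax" unfolding Amax_def
      by (rule member_le_sum[where f="\<lambda>i. \<Sum>k\<in>UNIV. A$i$k"]) (use Anonneg in \<open>auto intro: sum_nonneg\<close>)
    finally show ?thesis .
  qed
  have Amax0: "0 \<le> Amax" using Ale[of undefined undefined] Anonneg by (meson order_trans)
  have c_pos: "c > 0" unfolding c_def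
    by (subst Min_gr_iff) (use kk in \<open>auto intro!: mult_pos_pos simp: less_le\<close>)
  have c_le: "c \<le> A$x$(kk x) * (vstar$(kk x)/2) powr \<alpha>" for x
    unfolding c_def by (rule Min_le) auto
  have K0: "K \<ge> 0" unfolding K_def Amax_def[symmetric] using Amax0 c_pos by simp
  define z where "z n = 1 + real (Zcount X n \<omega> j)" for n
  have emp: "empirical X n \<omega> $ i = real (Zcount X n \<omega> i) / (real n + 1)" for n i
    by (simp add: empirical_def)
  have e1: "\<forall>\<^sub>F n in sequentially. \<forall>x. vstar$(kk x) / 2 < empirical X n \<omega> $ (kk x)"
  proof (rule eventually_all_finite)
    fix x
    have "(\<lambda>n. empirical X n \<omega> $ kk x) \<longlonglongrightarrow> vstar $ kk x" by (rule tendsto_vec_nth[OF lim])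
    moreover have "vstar$(kk x) / 2 < vstar $ kk x" using kk by auto
    ultimately show "\<forall>\<^sub>F n in sequentially. vstar$(kk x) / 2 < empirical X n \<omega> $ (kk x)"
      by (rule order_tendstoD(1))
  qed
  have zlim: "(\<lambda>n. z n / (real n + 1)) \<longlonglongrightarrow> 0"
  proof -
    have eq: "z n / (real n + 1) = inverse (real (Suc n)) + empirical X n \<omega> $ j" for n
      unfolding z_def emp by (simp add: add_divide_distrib divide_inverse add.commute distrib_right)
    have "(\<lambda>n. inverse (real (Suc n)) + empirical X n \<omega> $ j) \<longlonglongrightarrow> 0 + vstar $ j"
      by (intro tendsto_add LIMSEQ_inverse_real_of_nat tendsto_vec_nth lim)
    then show ?thesis unfolding eq using vj by simp
  qed
  have z0: "0 \<le> z n / (real n + 1)" for n unfolding z_def by simp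
  have e2: "\<forall>\<^sub>F n in sequentially. K * B * (z n / (real n + 1)) powr (\<alpha> - 1) < 1"
  proof -
    have "(\<lambda>n. (z n / (real n + 1)) powr (\<alpha> - 1)) \<longlonglongrightarrow> 0"
      by (rule tendsto_zero_powrI[OF zlim tendsto_const]) (use al z0 in auto)
    then have "(\<lambda>n. K * B * (z n / (real n + 1)) powr (\<alpha> - 1)) \<longlonglongrightarrow> K * B * 0"
      by (intro tendsto_mult tendsto_const)
    then show ?thesis by (rule order_tendstoD(2)) simp
  qed
  have main: "trans_prob A \<alpha> X n \<omega> j \<le> K * (z n / (real n + 1)) powr \<alpha>
     \<and> trans_prob A \<alpha> X n \<omega> j * B \<le> z n / (real n + 1)"
    if h1: "\<forall>x. vstar$(kk x) / 2 < empirical X n \<omega> $ (kk x)"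
      and h2: "K * B * (z n / (real n + 1)) powr (\<alpha> - 1) < 1" for n
  proof -
    define x where "x = X n \<omega>"
    define k where "k = kk x"
    define D where "D = (\<Sum>k\<in>UNIV. A $ x $ k * (1 + real (Zcount X n \<omega> k)) powr \<alpha>)"
    have np: "0 < real n + 1" by simp
    have "A$x$k * (1 + real (Zcount X n \<omega> k)) powr \<alpha> \<le> D"
      unfolding D_def by (rule member_le_sum[where f="\<lambda>k. A $ x $ k * (1 + real (Zcount X n \<omega> k)) powr \<alpha>"])
        (use Anonneg in auto)
    moreover have "(real n + 1) * (vstar$k / 2) \<le> 1 + real (Zcount X n \<omega> k)"
    proof -
      have "vstar$k / 2 < real (Zcount X n \<omega> k) / (real n + 1)" using h1 emp unfolding k_def by metis
      then have "(real n + 1) * (vstar$k / 2) < real (Zcount X n \<omega> k)"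
        using np by (simp add: field_simps)
      then show ?thesis by simp
    qed
    then have "((real n + 1) * (vstar$k / 2)) powr \<alpha> \<le> (1 + real (Zcount X n \<omega> k)) powr \<alpha>"
      using kk[rule_format, of x] al unfolding k_def by (intro powr_mono2) (auto intro!: mult_nonneg_nonneg)
    then have "A$x$k * (((real n + 1) powr \<alpha>) * (vstar$k / 2) powr \<alpha>) \<le> A$x$k * (1 + real (Zcount X n \<omega> k)) powr \<alpha>"
      using kk[rule_format, of x] powr_mult[of "real n + 1" "vstar$k / 2" \<alpha>] unfolding k_def by (intro mult_left_mono) auto
    ultimately have "(A$x$k * (vstar$k / 2) powr \<alpha>) * (real n + 1) powr \<alpha> \<le> D"
      by (simp add: algebra_simps)
    moreover have "c * (real n + 1) powr \<alpha> \<le> (A$x$k * (vstar$k / 2) powr \<alpha>) * (real n + 1) powr \<alpha>"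
      using c_le[of x] unfolding k_def by (intro mult_right_mono) auto
    ultimately have Dge: "c * (real n + 1) powr \<alpha> \<le> D" by linarith
    have cn: "0 < c * (real n + 1) powr \<alpha>" using c_pos by simp
    have zpa: "0 \<le> z n powr \<alpha>" by simp
    have D0: "0 < D" using cn Dge by linarith
    have tp: "trans_prob A \<alpha> X n \<omega> j = A$x$j * z n powr \<alpha> / D"
      unfolding trans_prob_def x_def D_def z_def by simp
    have "A$x$j * z n powr \<alpha> / D \<le> Amax * z n powr \<alpha> / D"
      using Ale[of x j] zpa cn Dge by (intro divide_right_mono mult_right_mono) auto
    also have "\<dots> \<le> Amax * z n powr \<alpha> / (c * (real n + 1) powr \<alpha>)"
      using Amax0 zpa cn Dge c_pos D0 by (intro divide_left_mono mult_nonneg_nonneg mult_pos_pos) auto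
    also have "\<dots> = K * (z n / (real n + 1)) powr \<alpha>"
      unfolding K_def Amax_def[symmetric] by (simp add: powr_divide)
    finally have p1: "trans_prob A \<alpha> X n \<omega> j \<le> K * (z n / (real n + 1)) powr \<alpha>" using tp by simp
    define u where "u = z n / (real n + 1)"
    have u0: "0 \<le> u" unfolding u_def by (rule z0)
    have "trans_prob A \<alpha> X n \<omega> j * B \<le> K * u powr \<alpha> * B"
      using p1 B unfolding u_def by (intro mult_right_mono) auto
    also have "\<dots> = (K * B * u powr (\<alpha> - 1)) * u"
    proof (cases "u = 0")
      case True then show ?thesis using al by simp
    next
      case False
      then have "u powr \<alpha> = u powr (\<alpha> - 1) * u" using u0 by (simp add: powr_diff)
      then show ?thesis by (simp add: algebra_simps)
    qed
    also have "\<dots> \<le> 1 * u" using h2 u0 unfolding u_def by (intro mult_right_mono) auto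
    finally show ?thesis using p1 unfolding u_def by simp
  qed
  from eventually_conj[OF e1 e2] obtain m where "\<forall>n\<ge>m. (\<forall>x. vstar$(kk x) / 2 < empirical X n \<omega> $ (kk x)) \<and> K * B * (z n / (real n + 1)) powr (\<alpha> - 1) < 1"
    unfolding eventually_sequentially by blast
  then show ?thesis using main unfolding z_def by blast
qed



lemma pow_diff_bound:
  fixes z :: real assumes "z \<ge> 1"
  shows "z * ((z+1)^b - z^b) \<le> real b * 2^b * z^b"
proof (induction b)
  case 0 then show ?case by simp
next
  case (Suc b)
  have zb: "z^b \<ge> 0" using assms by simp
  have "z * ((z+1)^Suc b - z^Suc b) = (z+1) * (z * ((z+1)^b - z^b)) + z * z^b"
    by (simp add: algebra_simps)
  also have "\<dots> \<le> (z+1) * (real b * 2^b * z^b) + z * z^b"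
    using Suc assms by (intro add_mono mult_left_mono) auto
  also have "\<dots> \<le> (2*z) * (real b * 2^b * z^b) + z * z^b"
    using assms zb by (intro add_mono mult_right_mono) auto
  also have "\<dots> = z^Suc b * (real b * 2^Suc b + 1)" by (simp add: algebra_simps)
  also have "\<dots> \<le> z^Suc b * (real (Suc b) * 2^Suc b)"
  proof (rule mult_left_mono)
    have "(1::real) \<le> 2^Suc b" by (rule one_le_power) simp
    then show "real b * 2 ^ Suc b + 1 \<le> real (Suc b) * 2 ^ Suc b" by (simp add: algebra_simps)
  qed (use assms in simp)
  finally show ?case by (simp add: algebra_simps)
qed

locale vrw = prob_space M for M :: "'w measure" +
  fixes X :: "nat \<Rightarrow> 'w \<Rightarrow> 'n::finite" and A :: "real^'n^'n" and \<alpha> :: real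
  assumes X_meas: "\<And>n. X n \<in> measurable M (count_space UNIV)"
  and X_law: "\<And>n j. AE \<omega> in M.
        real_cond_exp M (nat_filtration M X n) (indicator {\<omega>\<in>space M. X (Suc n) \<omega> = j}) \<omega>
          = trans_prob A \<alpha> X n \<omega> j"
  and A_nonneg: "\<And>i j. 0 \<le> A $ i $ j"
begin

abbreviation "F n \<equiv> nat_filtration M X n"

definition "Gen n = (\<Union>k\<in>{..n}. {X k -` B \<inter> space M | B. True})"

lemma Gen_Pow: "Gen n \<subseteq> Pow (space M)"
  unfolding Gen_def by auto

lemma space_F[simp]: "space (F n) = space M"
  unfolding nat_filtration_def Gen_def[symmetric] by (simp add: space_measure_of_conv)

lemma sets_F: "sets (F n) = sigma_sets (space M) (Gen n)"
  unfolding nat_filtration_def Gen_def[symmetric] by (simp add: sets_measure_of Gen_Pow)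

lemma Xpre_M: "X k -` B \<inter> space M \<in> sets M"
  using X_meas[of k] by (auto simp: measurable_def)

lemma subalg: "subalgebra M (F n)"
  unfolding subalgebra_def
proof
  show "space (F n) = space M" by simp
  have "Gen n \<subseteq> sets M" unfolding Gen_def using Xpre_M by auto
  then show "sets (F n) \<subseteq> sets M" unfolding sets_F
    by (metis sets.sigma_sets_subset)
qed

lemma Xpre_F: "k \<le> n \<Longrightarrow> X k -` B \<inter> space M \<in> sets (F n)"
  unfolding sets_F Gen_def by (rule sigma_sets.Basic) auto

definition "hist n \<omega> = restrict (\<lambda>k. X k \<omega>) {..n}"

lemma hist_meas: "hist n \<in> measurable (F n) (count_space (PiE {..n} (\<lambda>_. UNIV)))"
proof (subst measurable_count_space_eq_countable)
  show "countable (PiE {..n} (\<lambda>_. UNIV :: 'n set))"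
    by (intro countable_finite finite_PiE) auto
  show "hist n \<in> space (F n) \<rightarrow> PiE {..n} (\<lambda>_. UNIV) \<and>
    (\<forall>a\<in>PiE {..n} (\<lambda>_. UNIV). hist n -` {a} \<inter> space (F n) \<in> sets (F n))"
  proof safe
    fix a :: "nat \<Rightarrow> 'n" assume a: "a \<in> PiE {..n} (\<lambda>_. UNIV)"
    have "hist n -` {a} \<inter> space (F n) = (\<Inter>k\<in>{..n}. X k -` {a k} \<inter> space M)"
      using a by (auto simp: hist_def PiE_def extensional_def restrict_def fun_eq_iff)
    also have "\<dots> \<in> sets (F n)"
      by (intro sets.finite_INT Xpre_F) auto
    finally show "hist n -` {a} \<inter> space (F n) \<in> sets (F n)" .
  qed (auto simp: hist_def restrict_def split: if_split_asm)
qed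

lemma dep_meas:
  fixes g :: "'w \<Rightarrow> real"
  assumes dep: "\<And>\<omega> \<omega>'. \<omega> \<in> space M \<Longrightarrow> \<omega>' \<in> space M \<Longrightarrow> (\<forall>k\<le>n. X k \<omega> = X k \<omega>') \<Longrightarrow> g \<omega> = g \<omega>'"
  shows "g \<in> borel_measurable (F n)"
proof -
  define \<phi> where "\<phi> h = g (SOME \<omega>. \<omega> \<in> space M \<and> hist n \<omega> = h)" for h
  have eq: "\<phi> (hist n \<omega>) = g \<omega>" if "\<omega> \<in> space M" for \<omega>
  proof -
    have ex: "\<exists>\<omega>'. \<omega>' \<in> space M \<and> hist n \<omega>' = hist n \<omega>" using that by auto
    define \<omega>' where "\<omega>' = (SOME \<omega>'. \<omega>' \<in> space M \<and> hist n \<omega>' = hist n \<omega>)"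
    have w: "\<omega>' \<in> space M \<and> hist n \<omega>' = hist n \<omega>" unfolding \<omega>'_def by (rule someI_ex[OF ex])
    then have "\<forall>k\<le>n. X k \<omega> = X k \<omega>'"
      by (auto simp: hist_def restrict_def fun_eq_iff) (metis atMost_iff)
    then show ?thesis using dep[OF that] w unfolding \<phi>_def \<omega>'_def by auto
  qed
  have "(\<lambda>\<omega>. \<phi> (hist n \<omega>)) \<in> borel_measurable (F n)"
    by (rule measurable_compose[OF hist_meas]) (simp add: measurable_count_space_eq1)
  then show ?thesis
    by (rule measurable_cong[THEN iffD1, rotated]) (simp add: eq)
qed

lemma dep_meas_M:
  fixes g :: "'w \<Rightarrow> real"
  assumes dep: "\<And>\<omega> \<omega>'. \<omega> \<in> space M \<Longrightarrow> \<omega>' \<in> space M \<Longrightarrow> (\<forall>k\<le>n. X k \<omega> = X k \<omega>') \<Longrightarrow> g \<omega> = g \<omega>'"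
  shows "g \<in> borel_measurable M"
  by (rule measurable_from_subalg[OF subalg dep_meas[OF dep]])


lemma Zcount_dep: "(\<forall>k\<le>n. X k \<omega> = X k \<omega>') \<Longrightarrow> m \<le> n \<Longrightarrow> Zcount X m \<omega> j = Zcount X m \<omega>' j"
  unfolding Zcount_def by (rule arg_cong[where f=card]) auto

lemma trans_prob_dep: "(\<forall>k\<le>n. X k \<omega> = X k \<omega>') \<Longrightarrow> m \<le> n \<Longrightarrow> trans_prob A \<alpha> X m \<omega> j = trans_prob A \<alpha> X m \<omega>' j"
  unfolding trans_prob_def using Zcount_dep[of n \<omega> \<omega>' m] by simp

lemma trans_prob_meas: "(\<lambda>\<omega>. trans_prob A \<alpha> X n \<omega> j) \<in> borel_measurable M"
  by (rule dep_meas_M[of n]) (rule trans_prob_dep, auto)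

lemma ind_meas: "(indicator {\<omega>\<in>space M. X n \<omega> = j} :: 'w \<Rightarrow> real) \<in> borel_measurable M"
proof -
  have "{\<omega>\<in>space M. X n \<omega> = j} = X n -` {j} \<inter> space M" by auto
  then show ?thesis using Xpre_M by (simp add: borel_measurable_indicator)
qed

lemma tower:
  fixes W :: "'w \<Rightarrow> real"
  assumes Wm: "W \<in> borel_measurable (F n)" and Wb: "\<And>\<omega>. \<omega> \<in> space M \<Longrightarrow> \<bar>W \<omega>\<bar> \<le> B"
  shows "(\<integral>\<omega>. W \<omega> * indicator {\<omega>\<in>space M. X (Suc n) \<omega> = j} \<omega> \<partial>M)
       = (\<integral>\<omega>. W \<omega> * trans_prob A \<alpha> X n \<omega> j \<partial>M)"
proof -
  interpret S: finite_measure_subalgebra M "F n"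
    by unfold_locales (rule subalg)
  have WM: "W \<in> borel_measurable M" by (rule measurable_from_subalg[OF subalg Wm])
  have int: "integrable M (\<lambda>\<omega>. W \<omega> * indicator {\<omega>\<in>space M. X (Suc n) \<omega> = j} \<omega>)"
  proof (rule integrable_const_bound[where B=B])
    show "AE x in M. norm (W x * indicator {\<omega> \<in> space M. X (Suc n) \<omega> = j} x) \<le> B"
      using Wb by (auto simp: indicator_def abs_mult order_trans[OF _ Wb])
    show "(\<lambda>\<omega>. W \<omega> * indicator {\<omega> \<in> space M. X (Suc n) \<omega> = j} \<omega>) \<in> borel_measurable M"
      using WM ind_meas by measurable
  qed
  have "(\<integral>\<omega>. W \<omega> * indicator {\<omega>\<in>space M. X (Suc n) \<omega> = j} \<omega> \<partial>M)
      = (\<integral>\<omega>. W \<omega> * real_cond_exp M (F n) (indicator {\<omega>\<in>space M. X (Suc n) \<omega> = j}) \<omega> \<partial>M)"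
    by (rule S.real_cond_exp_intg(2)[symmetric, OF int Wm ind_meas])
  also have "\<dots> = (\<integral>\<omega>. W \<omega> * trans_prob A \<alpha> X n \<omega> j \<partial>M)"
  proof (rule integral_cong_AE)
    show "(\<lambda>\<omega>. W \<omega> * real_cond_exp M (F n) (indicator {\<omega>\<in>space M. X (Suc n) \<omega> = j}) \<omega>) \<in> borel_measurable M"
      using WM borel_measurable_cond_exp2 by measurable
    show "(\<lambda>\<omega>. W \<omega> * trans_prob A \<alpha> X n \<omega> j) \<in> borel_measurable M"
      using WM trans_prob_meas by measurable
    show "AE \<omega> in M. W \<omega> * real_cond_exp M (F n) (indicator {\<omega>\<in>space M. X (Suc n) \<omega> = j}) \<omega>
        = W \<omega> * trans_prob A \<alpha> X n \<omega> j"
      using X_law[of n j] by eventually_elim simp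
  qed
  finally show ?thesis .
qed

end

context vrw begin

lemma Zcount_le: "Zcount X n \<omega> j \<le> Suc n"
proof -
  have "Zcount X n \<omega> j \<le> card {..n}" unfolding Zcount_def by (rule card_mono) auto
  then show ?thesis by simp
qed

lemma Zcount_Suc: "Zcount X (Suc n) \<omega> j = Zcount X n \<omega> j + (if X (Suc n) \<omega> = j then 1 else 0)"
proof -
  have "{l. l \<le> Suc n \<and> X l \<omega> = j} = {l. l \<le> n \<and> X l \<omega> = j} \<union> (if X (Suc n) \<omega> = j then {Suc n} else {})"
    by (auto simp: le_Suc_eq)
  then show ?thesis unfolding Zcount_def by (auto simp: card_insert_if)
qed

definition zz :: "'n \<Rightarrow> nat \<Rightarrow> 'w \<Rightarrow> real" where "zz j n \<omega> = 1 + real (Zcount X n \<omega> j)"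

lemma zz_ge1: "zz j n \<omega> \<ge> 1" by (simp add: zz_def)
lemma zz_le: "zz j n \<omega> \<le> real n + 2" using Zcount_le[of n \<omega> j] by (simp add: zz_def)
lemma zz_Suc: "zz j (Suc n) \<omega> = zz j n \<omega> + indicator {\<omega>\<in>space M. X (Suc n) \<omega> = j} \<omega>"
  if "\<omega> \<in> space M" using that by (simp add: zz_def Zcount_Suc indicator_def)

lemma zz_dep: "(\<forall>k\<le>n. X k \<omega> = X k \<omega>') \<Longrightarrow> m \<le> n \<Longrightarrow> zz j m \<omega> = zz j m \<omega>'"
  unfolding zz_def using Zcount_dep by metis

lemma pp_nonneg: "0 \<le> trans_prob A \<alpha> X n \<omega> j"
  unfolding trans_prob_def using A_nonneg by (intro divide_nonneg_nonneg sum_nonneg mult_nonneg_nonneg) auto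

lemma pp_le1: "trans_prob A \<alpha> X n \<omega> j \<le> 1"
proof -
  have "A $ X n \<omega> $ j * (1 + real (Zcount X n \<omega> j)) powr \<alpha> \<le> (\<Sum>k\<in>UNIV. A $ X n \<omega> $ k * (1 + real (Zcount X n \<omega> k)) powr \<alpha>)"
    by (rule member_le_sum[where f="\<lambda>k. A $ X n \<omega> $ k * (1 + real (Zcount X n \<omega> k)) powr \<alpha>"]) (use A_nonneg in auto)
  moreover have "0 \<le> (\<Sum>k\<in>UNIV. A $ X n \<omega> $ k * (1 + real (Zcount X n \<omega> k)) powr \<alpha>)"
    using A_nonneg by (intro sum_nonneg mult_nonneg_nonneg) auto
  ultimately show ?thesis unfolding trans_prob_def
    by (cases "(\<Sum>k\<in>UNIV. A $ X n \<omega> $ k * (1 + real (Zcount X n \<omega> k)) powr \<alpha>) = 0") (auto simp: divide_le_eq_1)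
qed

definition G1 :: "'n \<Rightarrow> nat \<Rightarrow> nat \<Rightarrow> nat \<Rightarrow> 'w set" where
  "G1 j b m n = {\<omega>\<in>space M. \<forall>k\<in>{m..n}. trans_prob A \<alpha> X k \<omega> j * (real b * 2^b) \<le> zz j k \<omega> / (real k + 1)}"

lemma G1_dep: "\<omega> \<in> space M \<Longrightarrow> \<omega>' \<in> space M \<Longrightarrow> (\<forall>k\<le>n. X k \<omega> = X k \<omega>') \<Longrightarrow> (\<omega> \<in> G1 j b m n) = (\<omega>' \<in> G1 j b m n)"
  unfolding G1_def using zz_dep[of n \<omega> \<omega>'] trans_prob_dep[of n \<omega> \<omega>'] by auto

lemma G1_mono: "G1 j b m (Suc n) \<subseteq> G1 j b m n"
  unfolding G1_def by auto

lemma intg: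
  fixes g :: "'w \<Rightarrow> real"
  assumes dep: "\<And>\<omega> \<omega>'. \<omega> \<in> space M \<Longrightarrow> \<omega>' \<in> space M \<Longrightarrow> (\<forall>k\<le>n. X k \<omega> = X k \<omega>') \<Longrightarrow> g \<omega> = g \<omega>'"
    and bd: "\<And>\<omega>. \<omega> \<in> space M \<Longrightarrow> \<bar>g \<omega>\<bar> \<le> B"
  shows "integrable M g"
  by (rule integrable_const_bound[where B=B]) (use bd dep_meas_M[OF dep] in auto)

definition "W1 j b m n \<omega> = indicator (G1 j b m n) \<omega> * zz j n \<omega> ^ b"

lemma W1_dep: "\<omega> \<in> space M \<Longrightarrow> \<omega>' \<in> space M \<Longrightarrow> (\<forall>k\<le>n. X k \<omega> = X k \<omega>') \<Longrightarrow> W1 j b m n \<omega> = W1 j b m n \<omega>'"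
  unfolding W1_def indicator_def using G1_dep[of \<omega> \<omega>' n j b m] zz_dep[of n \<omega> \<omega>' n j] by auto

lemma W1_bd: "\<bar>W1 j b m n \<omega>\<bar> \<le> (real n + 2)^b"
proof -
  have "0 \<le> zz j n \<omega>" using zz_ge1[of j n \<omega>] by simp
  then have "zz j n \<omega> ^ b \<le> (real n + 2)^b" by (intro power_mono zz_le)
  then show ?thesis unfolding W1_def indicator_def using \<open>0 \<le> zz j n \<omega>\<close> by auto
qed

lemma W1_int: "integrable M (W1 j b m n)"
  by (rule intg[OF W1_dep W1_bd])

lemma e_triv: "(\<integral>\<omega>. W1 j b m n \<omega> \<partial>M) \<le> (real n + 2)^b"
proof -
  have "(\<integral>\<omega>. W1 j b m n \<omega> \<partial>M) \<le> (\<integral>\<omega>. (real n + 2)^b \<partial>M)"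
    by (intro integral_mono W1_int) (simp_all add: abs_le_D1[OF W1_bd])
  also have "\<dots> = (real n + 2)^b" by (simp add: prob_space)
  finally show ?thesis .
qed

lemma e_step:
  assumes "m \<le> n"
  shows "(\<integral>\<omega>. W1 j b m (Suc n) \<omega> \<partial>M) \<le> (1 + 1 / (real n + 1)) * (\<integral>\<omega>. W1 j b m n \<omega> \<partial>M)"
proof -
  define I where "I = (indicator {\<omega>\<in>space M. X (Suc n) \<omega> = j} :: 'w \<Rightarrow> real)"
  define D where "D \<omega> = indicator (G1 j b m n) \<omega> * ((zz j n \<omega> + 1)^b - zz j n \<omega>^b)" for \<omega>
  have Ddep: "D \<omega> = D \<omega>'" if "\<omega> \<in> space M" "\<omega>' \<in> space M" "\<forall>k\<le>n. X k \<omega> = X k \<omega>'" for \<omega> \<omega>'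
    unfolding D_def indicator_def using G1_dep[OF that, of j b m] zz_dep[OF that(3), of n j] by auto
  have Dbd: "\<bar>D \<omega>\<bar> \<le> (real n + 3)^b" for \<omega>
  proof -
    have z0: "0 \<le> zz j n \<omega>" using zz_ge1[of j n \<omega>] by simp
    have "zz j n \<omega>^b \<le> (zz j n \<omega> + 1)^b" using z0 by (intro power_mono) auto
    moreover have "(zz j n \<omega> + 1)^b \<le> (real n + 3)^b" using z0 zz_le[of j n \<omega>] by (intro power_mono) auto
    moreover have "0 \<le> zz j n \<omega>^b" using z0 by simp
    ultimately show ?thesis unfolding D_def indicator_def by auto
  qed
  have Dm: "D \<in> borel_measurable (F n)" by (rule dep_meas) (rule Ddep)
  have Iint: "integrable M (\<lambda>\<omega>. D \<omega> * I \<omega>)"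
  proof (rule intg[where n="Suc n" and B="(real n + 3)^b"])
    fix \<omega> \<omega>' assume h: "\<omega> \<in> space M" "\<omega>' \<in> space M" "\<forall>k\<le>Suc n. X k \<omega> = X k \<omega>'"
    then have "D \<omega> = D \<omega>'" by (intro Ddep) auto
    moreover have "I \<omega> = I \<omega>'" using h unfolding I_def indicator_def by auto
    ultimately show "D \<omega> * I \<omega> = D \<omega>' * I \<omega>'" by simp
  next
    fix \<omega> show "\<bar>D \<omega> * I \<omega>\<bar> \<le> (real n + 3)^b"
      using Dbd[of \<omega>] unfolding I_def indicator_def by auto
  qed
  have Pint: "integrable M (\<lambda>\<omega>. D \<omega> * trans_prob A \<alpha> X n \<omega> j)"
  proof (rule intg[where n=n and B="(real n + 3)^b"])
    fix \<omega> \<omega>' assume h: "\<omega> \<in> space M" "\<omega>' \<in> space M" "\<forall>k\<le>n. X k \<omega> = X k \<omega>'"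
    then show "D \<omega> * trans_prob A \<alpha> X n \<omega> j = D \<omega>' * trans_prob A \<alpha> X n \<omega>' j"
      using Ddep[OF h] trans_prob_dep[OF h(3), of n j] by simp
  next
    fix \<omega>
    have tp0: "0 \<le> trans_prob A \<alpha> X n \<omega> j" by (rule pp_nonneg)
    have "\<bar>D \<omega> * trans_prob A \<alpha> X n \<omega> j\<bar> = \<bar>D \<omega>\<bar> * trans_prob A \<alpha> X n \<omega> j"
      using pp_nonneg by (simp add: abs_mult)
    also have "\<dots> \<le> (real n + 3)^b * 1"
      using pp_nonneg[of n \<omega> j] by (intro mult_mono Dbd pp_le1 pp_nonneg) auto
    finally show "\<bar>D \<omega> * trans_prob A \<alpha> X n \<omega> j\<bar> \<le> (real n + 3)^b" by simp
  qed
  have pw1: "W1 j b m (Suc n) \<omega> \<le> W1 j b m n \<omega> + D \<omega> * I \<omega>" if "\<omega> \<in> space M" for \<omega>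
  proof -
    have z0: "0 \<le> zz j n \<omega>" using zz_ge1[of j n \<omega>] by simp
    have D0: "0 \<le> D \<omega>" using z0 unfolding D_def indicator_def by (auto intro: power_mono)
    have W0: "0 \<le> W1 j b m n \<omega>" using z0 unfolding W1_def indicator_def by auto
    show ?thesis
    proof (cases "\<omega> \<in> G1 j b m (Suc n)")
      case True
      then have "\<omega> \<in> G1 j b m n" using G1_mono[of j b m n] by blast
      then show ?thesis using True that unfolding W1_def D_def I_def
        by (auto simp: zz_Suc indicator_def)
    next
      case False
      then show ?thesis using D0 W0 unfolding W1_def I_def by (auto simp: indicator_def)
    qed
  qed
  have pw2: "D \<omega> * trans_prob A \<alpha> X n \<omega> j \<le> W1 j b m n \<omega> / (real n + 1)" for \<omega>
  proof (cases "\<omega> \<in> G1 j b m n")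
    case True
    define z where "z = zz j n \<omega>"
    define p where "p = trans_prob A \<alpha> X n \<omega> j"
    have z1: "z \<ge> 1" unfolding z_def by (rule zz_ge1)
    have p0: "p \<ge> 0" unfolding p_def by (rule pp_nonneg)
    have hp: "p * (real b * 2^b) \<le> z / (real n + 1)" using True assms unfolding G1_def z_def p_def by auto
    have hb: "z * ((z+1)^b - z^b) \<le> real b * 2^b * z^b" by (rule pow_diff_bound[OF z1])
    have "z * (((z+1)^b - z^b) * p) \<le> (real b * 2^b * z^b) * p"
      using hb p0 by (metis mult.assoc mult_right_mono)
    also have "\<dots> = z^b * (p * (real b * 2^b))" by (simp add: algebra_simps)
    also have "\<dots> \<le> z^b * (z / (real n + 1))"
      using hp z1 by (intro mult_left_mono) auto
    also have "\<dots> = z * (z^b / (real n + 1))" by (simp add: algebra_simps)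
    finally have "z * (((z+1)^b - z^b) * p) \<le> z * (z^b / (real n + 1))" .
    then have "((z+1)^b - z^b) * p \<le> z^b / (real n + 1)"
      by (rule mult_left_le_imp_le) (use z1 in simp)
    then show ?thesis using True unfolding D_def W1_def z_def p_def by simp
  next
    case False
    then show ?thesis unfolding D_def W1_def by simp
  qed
  have "(\<integral>\<omega>. W1 j b m (Suc n) \<omega> \<partial>M) \<le> (\<integral>\<omega>. W1 j b m n \<omega> + D \<omega> * I \<omega> \<partial>M)"
    by (intro integral_mono_AE W1_int Bochner_Integration.integrable_add Iint) (use pw1 in auto)
  also have "\<dots> = (\<integral>\<omega>. W1 j b m n \<omega> \<partial>M) + (\<integral>\<omega>. D \<omega> * I \<omega> \<partial>M)"
    by (intro Bochner_Integration.integral_add W1_int Iint)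
  also have "(\<integral>\<omega>. D \<omega> * I \<omega> \<partial>M) = (\<integral>\<omega>. D \<omega> * trans_prob A \<alpha> X n \<omega> j \<partial>M)"
    unfolding I_def by (rule tower[OF Dm, of "(real n + 3)^b"]) (use Dbd in auto)
  also have "\<dots> \<le> (\<integral>\<omega>. W1 j b m n \<omega> / (real n + 1) \<partial>M)"
    by (intro integral_mono Pint integrable_divide W1_int pw2)
  also have "\<dots> = (\<integral>\<omega>. W1 j b m n \<omega> \<partial>M) / (real n + 1)" by simp
  finally show ?thesis by (simp add: algebra_simps add_divide_distrib)
qed

end


lemma summable_powr_shift: "s < -1 \<Longrightarrow> summable (\<lambda>n. (real n + 1) powr s)"
proof -
  assume "s < -1"
  then have "summable (\<lambda>n. real n powr s)" by (simp add: summable_real_powr_iff)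
  then have "summable (\<lambda>n. real (Suc n) powr s)" by (subst summable_Suc_iff)
  then show ?thesis by (simp add: add.commute)
qed

context vrw begin

lemma e_bound: "(\<integral>\<omega>. W1 j b m n \<omega> \<partial>M) \<le> (real m + 2)^b * (real n + 1)"
proof (induction n)
  case 0
  have "(\<integral>\<omega>. W1 j b m 0 \<omega> \<partial>M) \<le> (real 0 + 2)^b" by (rule e_triv)
  also have "\<dots> \<le> (real m + 2)^b" by (intro power_mono) auto
  finally show ?case by simp
next
  case (Suc n)
  show ?case
  proof (cases "m \<le> n")
    case True
    have "(\<integral>\<omega>. W1 j b m (Suc n) \<omega> \<partial>M) \<le> (1 + 1 / (real n + 1)) * (\<integral>\<omega>. W1 j b m n \<omega> \<partial>M)"
      by (rule e_step[OF True])
    also have "\<dots> \<le> (1 + 1 / (real n + 1)) * ((real m + 2)^b * (real n + 1))"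
      by (intro mult_left_mono Suc) (simp add: add_pos_pos)
    also have "\<dots> = (real m + 2)^b * (real (Suc n) + 1)" by (simp add: field_simps)
    finally show ?thesis .
  next
    case False
    have "(\<integral>\<omega>. W1 j b m (Suc n) \<omega> \<partial>M) \<le> (real (Suc n) + 2)^b" by (rule e_triv)
    also have "\<dots> \<le> (real m + 2)^b" using False by (intro power_mono) auto
    also have "\<dots> \<le> (real m + 2)^b * (real (Suc n) + 1)" by simp
    finally show ?thesis .
  qed
qed

lemma W1_meas: "W1 j b m n \<in> borel_measurable M"
  by (rule dep_meas_M[OF W1_dep])

lemma W1_nonneg: "0 \<le> W1 j b m n \<omega>"
  unfolding W1_def using zz_ge1[of j n \<omega>] by simp

lemma stage1_m:
  assumes b: "b > 0" and eta: "\<eta> > 0" and beta: "real b * \<eta> \<ge> 3"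
  shows "AE \<omega> in M. (\<forall>n. \<omega> \<in> G1 j b m n) \<longrightarrow> (\<forall>\<^sub>F n in sequentially. zz j n \<omega> < (real n + 1) powr \<eta>)"
proof -
  define An where "An n = {\<omega>\<in>space M. (real n + 1) powr (real b * \<eta>) \<le> W1 j b m n \<omega>}" for n
  have An_sets: "An n \<in> sets M" for n
    unfolding An_def using W1_meas[of j b m n] by measurable
  have An_bd: "measure M (An n) \<le> (real m + 2)^b * (real n + 1) powr (-2)" for n
  proof -
    have pos: "0 < (real n + 1) powr (real b * \<eta>)" by simp
    have "measure M (An n) \<le> (\<integral>\<omega>. W1 j b m n \<omega> \<partial>M) / (real n + 1) powr (real b * \<eta>)"
      unfolding An_def by (rule integral_Markov_inequality_measure[OF W1_int _ _ pos]) (auto simp: W1_nonneg)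
    also have "\<dots> \<le> (real m + 2)^b * (real n + 1) / (real n + 1) powr (real b * \<eta>)"
      by (intro divide_right_mono e_bound) simp
    also have "\<dots> = (real m + 2)^b * ((real n + 1) powr 1 / (real n + 1) powr (real b * \<eta>))" by simp
    also have "\<dots> = (real m + 2)^b * (real n + 1) powr (1 - real b * \<eta>)"
      by (simp add: powr_diff)
    also have "\<dots> \<le> (real m + 2)^b * (real n + 1) powr (-2)"
      using beta by (intro mult_left_mono powr_mono) auto
    finally show ?thesis .
  qed
  have summ: "summable (\<lambda>n. measure M (An n))"
  proof (rule summable_comparison_test')
    show "summable (\<lambda>n. (real m + 2)^b * (real n + 1) powr (-2))"
      by (intro summable_mult summable_powr_shift) simp
    show "norm (measure M (An n)) \<le> (real m + 2)^b * (real n + 1) powr (-2)" for n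
      using An_bd[of n] by simp
  qed
  have "AE \<omega> in M. eventually (\<lambda>n. \<omega> \<in> space M - An n) sequentially"
    by (rule borel_cantelli_AE1[OF An_sets _ summ]) (simp add: emeasure_eq_measure)
  then show ?thesis
  proof eventually_elim
    case (elim \<omega>)
    show ?case
    proof
      assume G: "\<forall>n. \<omega> \<in> G1 j b m n"
      from elim show "\<forall>\<^sub>F n in sequentially. zz j n \<omega> < (real n + 1) powr \<eta>"
      proof eventually_elim
        case (elim n)
        then have lt: "zz j n \<omega> ^ b < (real n + 1) powr (real b * \<eta>)"
          using G unfolding An_def W1_def by auto
        have "(real n + 1) powr (real b * \<eta>) = ((real n + 1) powr \<eta>) ^ b"
          by (simp add: powr_realpow[symmetric] powr_powr mult.commute)
        with lt have "zz j n \<omega> ^ b < ((real n + 1) powr \<eta>) ^ b" by simp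
        then show ?case by (rule power_less_imp_less_base) simp
      qed
    qed
  qed
qed

lemma stage1:
  assumes b: "b > 0" and eta: "\<eta> > 0" and beta: "real b * \<eta> \<ge> 3"
  shows "AE \<omega> in M. \<forall>m. (\<forall>n. \<omega> \<in> G1 j b m n) \<longrightarrow> (\<forall>\<^sub>F n in sequentially. zz j n \<omega> < (real n + 1) powr \<eta>)"
  by (subst AE_all_countable) (use stage1_m[OF assms] in blast)

end

context vrw begin

definition good2 :: "'n \<Rightarrow> real \<Rightarrow> real \<Rightarrow> nat \<Rightarrow> 'w \<Rightarrow> bool" where
  "good2 j K \<eta> n \<omega> \<longleftrightarrow> trans_prob A \<alpha> X n \<omega> j \<le> K * (zz j n \<omega> / (real n + 1)) powr \<alpha> \<and> zz j n \<omega> < (real n + 1) powr \<eta>"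

lemma stage2:
  assumes s: "(\<eta> - 1) * \<alpha> < -1" and K: "K \<ge> 0" and al: "\<alpha> > 0"
  shows "AE \<omega> in M. \<forall>\<^sub>F n in sequentially. \<not> (good2 j K \<eta> n \<omega> \<and> X (Suc n) \<omega> = j)"
proof -
  define Wg where "Wg n = (indicator {\<omega>\<in>space M. good2 j K \<eta> n \<omega>} :: 'w \<Rightarrow> real)" for n
  define I where "I n = (indicator {\<omega>\<in>space M. X (Suc n) \<omega> = j} :: 'w \<Rightarrow> real)" for n
  define Cn where "Cn n = {\<omega>\<in>space M. good2 j K \<eta> n \<omega> \<and> X (Suc n) \<omega> = j}" for n
  have gdep: "good2 j K \<eta> n \<omega> = good2 j K \<eta> n \<omega>'" if "\<forall>k\<le>n. X k \<omega> = X k \<omega>'" for n \<omega> \<omega>'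
    unfolding good2_def using trans_prob_dep[OF that, of n j] zz_dep[OF that, of n j] by simp
  have Wdep: "Wg n \<omega> = Wg n \<omega>'" if "\<omega> \<in> space M" "\<omega>' \<in> space M" "\<forall>k\<le>n. X k \<omega> = X k \<omega>'" for n \<omega> \<omega>'
    unfolding Wg_def indicator_def using gdep[OF that(3)] that(1,2) by auto
  have Wm: "Wg n \<in> borel_measurable (F n)" for n by (rule dep_meas) (rule Wdep)
  have WmM: "Wg n \<in> borel_measurable M" for n by (rule dep_meas_M) (rule Wdep)
  have Cn_eq: "Cn n = {\<omega>\<in>space M. Wg n \<omega> * I n \<omega> = 1}" for n
    unfolding Cn_def Wg_def I_def indicator_def by auto
  have Cn_sets: "Cn n \<in> sets M" for n
    unfolding Cn_eq using WmM[of n] ind_meas[of "Suc n" j] unfolding I_def by measurable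
  have Cn_ind: "indicator (Cn n) \<omega> = Wg n \<omega> * I n \<omega>" for n \<omega>
    unfolding Cn_def Wg_def I_def indicator_def by auto
  have bd: "measure M (Cn n) \<le> K * (real n + 1) powr ((\<eta> - 1) * \<alpha>)" for n
  proof -
    have "measure M (Cn n) = (\<integral>\<omega>. indicator (Cn n) \<omega> \<partial>M)"
      using Cn_sets by (simp add: emeasure_eq_measure)
    also have "\<dots> = (\<integral>\<omega>. Wg n \<omega> * I n \<omega> \<partial>M)" by (simp add: Cn_ind)
    also have "\<dots> = (\<integral>\<omega>. Wg n \<omega> * trans_prob A \<alpha> X n \<omega> j \<partial>M)"
      unfolding I_def by (rule tower[OF Wm, where B=1]) (simp add: Wg_def indicator_def)
    also have "\<dots> \<le> (\<integral>\<omega>. K * (real n + 1) powr ((\<eta> - 1) * \<alpha>) \<partial>M)"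
    proof (rule integral_mono)
      show "integrable M (\<lambda>\<omega>. Wg n \<omega> * trans_prob A \<alpha> X n \<omega> j)"
      proof (rule intg[where n=n and B=1])
        fix \<omega> \<omega>' assume h: "\<omega> \<in> space M" "\<omega>' \<in> space M" "\<forall>k\<le>n. X k \<omega> = X k \<omega>'"
        then show "Wg n \<omega> * trans_prob A \<alpha> X n \<omega> j = Wg n \<omega>' * trans_prob A \<alpha> X n \<omega>' j"
          using Wdep[OF h] trans_prob_dep[OF h(3), of n j] by simp
      next
        fix \<omega> show "\<bar>Wg n \<omega> * trans_prob A \<alpha> X n \<omega> j\<bar> \<le> 1"
          using pp_nonneg[of n \<omega> j] pp_le1[of n \<omega> j] unfolding Wg_def indicator_def by auto
      qed
      show "integrable M (\<lambda>\<omega>. K * (real n + 1) powr ((\<eta> - 1) * \<alpha>))" by simp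
      fix \<omega>
      show "Wg n \<omega> * trans_prob A \<alpha> X n \<omega> j \<le> K * (real n + 1) powr ((\<eta> - 1) * \<alpha>)"
      proof (cases "\<omega> \<in> space M \<and> good2 j K \<eta> n \<omega>")
        case True
        then have p: "trans_prob A \<alpha> X n \<omega> j \<le> K * (zz j n \<omega> / (real n + 1)) powr \<alpha>"
          and z: "zz j n \<omega> < (real n + 1) powr \<eta>" by (auto simp: good2_def)
        have z0: "0 \<le> zz j n \<omega> / (real n + 1)" using zz_ge1[of j n \<omega>] by simp
        have "zz j n \<omega> / (real n + 1) \<le> (real n + 1) powr \<eta> / (real n + 1)"
          using z by (intro divide_right_mono) auto
        also have "\<dots> = (real n + 1) powr (\<eta> - 1)" by (simp add: powr_diff)
        finally have "(zz j n \<omega> / (real n + 1)) powr \<alpha> \<le> ((real n + 1) powr (\<eta> - 1)) powr \<alpha>"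
          using z0 al by (intro powr_mono2) auto
        also have "\<dots> = (real n + 1) powr ((\<eta> - 1) * \<alpha>)" by (simp add: powr_powr)
        finally have "K * (zz j n \<omega> / (real n + 1)) powr \<alpha> \<le> K * (real n + 1) powr ((\<eta> - 1) * \<alpha>)"
          using K by (intro mult_left_mono) auto
        with p True show ?thesis unfolding Wg_def by simp
      next
        case False
        then show ?thesis unfolding Wg_def using K by auto
      qed
    qed
    also have "\<dots> = K * (real n + 1) powr ((\<eta> - 1) * \<alpha>)" by (simp add: prob_space)
    finally show ?thesis .
  qed
  have summ: "summable (\<lambda>n. measure M (Cn n))"
  proof (rule summable_comparison_test')
    show "summable (\<lambda>n. K * (real n + 1) powr ((\<eta> - 1) * \<alpha>))"
      by (intro summable_mult summable_powr_shift s)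
    show "norm (measure M (Cn n)) \<le> K * (real n + 1) powr ((\<eta> - 1) * \<alpha>)" for n
      using bd[of n] by simp
  qed
  have "AE \<omega> in M. eventually (\<lambda>n. \<omega> \<in> space M - Cn n) sequentially"
    by (rule borel_cantelli_AE1[OF Cn_sets _ summ]) (simp add: emeasure_eq_measure)
  then show ?thesis
    by eventually_elim (auto elim!: eventually_mono simp: Cn_def)
qed

end

lemma kk_exists:
  fixes A :: "real^'n^'n" and vstar :: "real^'n"
  assumes D: "vstar \<in> Delta A" and off: "\<forall>i j. i \<noteq> j \<longrightarrow> 0 < A $ i $ j" and nn: "\<forall>i j. 0 \<le> A $ i $ j"
  shows "\<forall>x. \<exists>k. 0 < A$x$k \<and> 0 < vstar$k"
proof -
  have v0: "\<forall>i. 0 \<le> vstar$i" and s1: "(\<Sum>i\<in>UNIV. vstar$i) = 1"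
    and v34: "\<forall>i. A$i$i = 0 \<longrightarrow> vstar$i \<le> 3/4" using D by (auto simp: Delta_def)
  obtain i where vi: "0 < vstar$i"
  proof (rule ccontr)
    assume "\<not> thesis"
    then have "\<forall>i. vstar$i = 0" using that v0 by (metis less_eq_real_def)
    then show False using s1 by simp
  qed
  show ?thesis
  proof
    fix x
    show "\<exists>k. 0 < A$x$k \<and> 0 < vstar$k"
    proof (cases "x = i")
      case False then show ?thesis using off vi by blast
    next
      case True
      show ?thesis
      proof (cases "0 < A$i$i")
        case True then show ?thesis using vi \<open>x = i\<close> by blast
      next
        case False
        then have "A$i$i = 0" using nn by (metis less_eq_real_def)
        then have "vstar$i \<le> 3/4" using v34 by blast
        show ?thesis
        proof (rule ccontr)
          assume "\<not> ?thesis"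
          then have z: "\<forall>k. k \<noteq> i \<longrightarrow> vstar$k = 0" using off \<open>x = i\<close> v0 by (metis less_eq_real_def)
          have "(\<Sum>k\<in>UNIV. vstar$k) = vstar$i + (\<Sum>k\<in>UNIV-{i}. vstar$k)"
            by (subst sum.remove[of UNIV i]) auto
          also have "(\<Sum>k\<in>UNIV-{i}. vstar$k) = 0" using z by (intro sum.neutral) auto
          finally show False using s1 \<open>vstar$i \<le> 3/4\<close> by simp
        qed
      qed
    qed
  qed
qed

theorem theorem3p12:
  fixes M :: "'w measure" and X :: "nat \<Rightarrow> 'w \<Rightarrow> 'n::finite"
    and A :: "real^'n^'n" and \<alpha> :: real and vstar :: "real^'n"
  assumes N2: "CARD('n) \<ge> 2"
    and alpha: "\<alpha> > 1"
    and A_sym: "\<forall>i j. A $ i $ j = A $ j $ i"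
    and A_nonneg: "\<forall>i j. 0 \<le> A $ i $ j"
    and A_offdiag: "\<forall>i j. i \<noteq> j \<longrightarrow> 0 < A $ i $ j"
    and A_rowsum: "\<exists>c. \<forall>i. (\<Sum>j\<in>UNIV. A $ i $ j) = c"
    and P: "prob_space M"
    and X_meas: "\<forall>n. X n \<in> measurable M (count_space UNIV)"
    and X_law: "\<forall>n j. AE \<omega> in M.
        real_cond_exp M (nat_filtration M X n) (indicator {\<omega>\<in>space M. X (Suc n) \<omega> = j}) \<omega>
          = trans_prob A \<alpha> X n \<omega> j"
    and stable: "linearly_stable A \<alpha> vstar"
  shows "AE \<omega> in M. (\<lambda>n. empirical X n \<omega>) \<longlonglongrightarrow> vstar \<longrightarrow>
           finite {n. X n \<omega> \<notin> {i. vstar $ i \<noteq> 0}}"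
proof -
  have vD: "vstar \<in> Delta A" using stable by (simp add: linearly_stable_def equilibrium_def)
  interpret vrw M X A \<alpha>
    by (rule vrw.intro[OF P]) (unfold_locales, use X_meas X_law A_nonneg in auto)
  have "\<forall>x. \<exists>k. 0 < A$x$k \<and> 0 < vstar$k" by (rule kk_exists[OF vD A_offdiag assms(4)])
  then obtain kk where kk: "\<forall>x. 0 < A$x$(kk x) \<and> 0 < vstar$(kk x)" by metis
  define c where "c = Min (range (\<lambda>x. A$x$(kk x) * (vstar$(kk x)/2) powr \<alpha>))"
  define K where "K = (\<Sum>i\<in>UNIV. \<Sum>k\<in>UNIV. A$i$k) / c"
  have c_pos: "c > 0" unfolding c_def
    by (subst Min_gr_iff) (use kk in \<open>auto intro!: mult_pos_pos simp: less_le\<close>)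
  have K0: "K \<ge> 0" unfolding K_def using c_pos assms(4) by (auto intro!: divide_nonneg_pos sum_nonneg)
  define \<eta> where "\<eta> = (1 - 1/\<alpha>) / 2"
  define \<beta> where "\<beta> = nat \<lceil>3/\<eta>\<rceil> + 1"
  have eta0: "\<eta> > 0" unfolding \<eta>_def using alpha by (simp add: field_simps)
  have beta0: "\<beta> > 0" unfolding \<beta>_def by simp
  have betaeta: "real \<beta> * \<eta> \<ge> 3"
  proof -
    have "3/\<eta> \<le> real \<beta>" unfolding \<beta>_def by linarith
    then show ?thesis using eta0 by (simp add: field_simps)
  qed
  have s: "(\<eta> - 1) * \<alpha> < -1" unfolding \<eta>_def using alpha by (simp add: field_simps)
  have AE1: "AE \<omega> in M. \<forall>j. \<forall>m. (\<forall>n. \<omega> \<in> G1 j \<beta> m n) \<longrightarrow> (\<forall>\<^sub>F n in sequentially. zz j n \<omega> < (real n + 1) powr \<eta>)"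
    by (subst AE_all_countable) (use stage1[OF beta0 eta0 betaeta] in blast)
  have AE2: "AE \<omega> in M. \<forall>j. \<forall>\<^sub>F n in sequentially. \<not> (good2 j K \<eta> n \<omega> \<and> X (Suc n) \<omega> = j)"
    by (subst AE_all_countable) (use stage2[OF s K0] alpha in auto)
  show ?thesis
    using AE1 AE2 AE_space
  proof eventually_elim
    case (elim \<omega>)
    show ?case
    proof
      assume lim: "(\<lambda>n. empirical X n \<omega>) \<longlonglongrightarrow> vstar"
      have fin: "finite {n. X n \<omega> = j}" if vj: "vstar $ j = 0" for j
      proof -
        obtain m where m: "\<forall>n\<ge>m. trans_prob A \<alpha> X n \<omega> j \<le> K * ((1 + real (Zcount X n \<omega> j)) / (real n + 1)) powr \<alpha>
                  \<and> trans_prob A \<alpha> X n \<omega> j * (real \<beta> * 2^\<beta>) \<le> (1 + real (Zcount X n \<omega> j)) / (real n + 1)"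
          using det[OF alpha assms(4) kk c_def K_def lim vj, of "real \<beta> * 2^\<beta>"] by auto
        have "\<forall>n. \<omega> \<in> G1 j \<beta> m n" using m elim unfolding G1_def zz_def by auto
        then have ev1: "\<forall>\<^sub>F n in sequentially. zz j n \<omega> < (real n + 1) powr \<eta>" using elim by blast
        have ev2: "\<forall>\<^sub>F n in sequentially. n \<ge> m" by (rule eventually_ge_at_top)
        have ev3: "\<forall>\<^sub>F n in sequentially. \<not> (good2 j K \<eta> n \<omega> \<and> X (Suc n) \<omega> = j)" using elim by blast
        have "\<forall>\<^sub>F n in sequentially. X (Suc n) \<omega> \<noteq> j"
          using ev1 ev2 ev3
        proof eventually_elim
          case (elim n)
          then have "good2 j K \<eta> n \<omega>" using m unfolding good2_def zz_def by auto
          then show ?case using elim by blast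
        qed
        then obtain N where N: "\<forall>n\<ge>N. X (Suc n) \<omega> \<noteq> j" unfolding eventually_sequentially by blast
        have "{n. X n \<omega> = j} \<subseteq> {..N}"
        proof
          fix n assume "n \<in> {n. X n \<omega> = j}"
          then have "X n \<omega> = j" by simp
          show "n \<in> {..N}"
          proof (rule ccontr)
            assume "n \<notin> {..N}"
            then obtain k where "n = Suc k" "k \<ge> N" by (cases n) auto
            then show False using N \<open>X n \<omega> = j\<close> by auto
          qed
        qed
        then show ?thesis by (rule finite_subset) simp
      qed
      have "{n. X n \<omega> \<notin> {i. vstar $ i \<noteq> 0}} = (\<Union>j\<in>{j. vstar $ j = 0}. {n. X n \<omega> = j})" by auto
      also have "finite \<dots>" using fin by (intro finite_UN_I) auto
      finally show "finite {n. X n \<omega> \<notin> {i. vstar $ i \<noteq> 0}}" .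
    qed
  qed
qed

end
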